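(* Let $K:\ell^2\to\mathcal{H}$ be a bounded, linear and injective operator into a real Hilbert space $\mathcal{H}$, $f\in\mathcal{H}$, $w=(w_k)$ with $w_k\ge w_0>0$, and $\gamma>0$. For $u\in\ell^2$ let $\mathcal{A}=\{k: |u-\gamma K^*(Ku-f)|_k>\gamma w_k\}$, $\mathcal{I}=\mathbb{N}\setminus\mathcal{A}$, and $\mathcal{G}(u)=\begin{pmatrix}\gamma\mathcal{M}_{\mathcal{A}\mathcal{A}} & \gamma\mathcal{M}_{\mathcal{A}\mathcal{I}}\\ 0 & I_{\mathcal{I}}\end{pmatrix}$ (equivalently $\mathcal{G}(u)=(I-P_{\mathcal{A}})+\gamma P_{\mathcal{A}}K^*K$). Then $\mathcal{G}(u)$ is boundedly invertible from $\ell^2$ onto $\ell^2$, and $$\|\mathcal{G}(u)^{-1}\|\le\|\mathcal{M}_{\mathcal{A}\mathcal{A}}^{-1}\|\big(\tfrac1\gamma+\|\mathcal{M}_{\mathcal{A}\mathcal{I}}\|\big)+1.$$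
   Context: $K^*$ is the Hilbert space adjoint of $K$; $|x|_k$ means $|x_k|$. $P_{\mathcal{B}}$ denotes the coordinate projection onto the indices in $\mathcal{B}\subset\mathbb{N}$, and for index sets $\mathcal{B},\mathcal{C}$, $\mathcal{M}_{\mathcal{B}\mathcal{C}}=P_{\mathcal{B}}K^*K|_{\ell^2(\mathcal{C})}$, viewed as an operator from sequences supported on $\mathcal{C}$ to sequences supported on $\mathcal{B}$; $\mathcal{M}_{\mathcal{A}\mathcal{A}}^{-1}$ is the inverse of $\mathcal{M}_{\mathcal{A}\mathcal{A}}$ on the (finite-dimensional) space of sequences supported on $\mathcal{A}$. *)

theory Defs
  imports "HOL-Analysis.Analysis"
begin

typedef l2 = "{x :: nat \<Rightarrow> real. summable (\<lambda>k. (x k)\<^sup>2)}"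
  morphisms l2_seq Abs_l2
  by (rule exI[of _ "\<lambda>_. 0"]) simp

setup_lifting type_definition_l2

lemma l2_summable_add:
  fixes x y :: "nat \<Rightarrow> real"
  assumes "summable (\<lambda>k. (x k)\<^sup>2)" "summable (\<lambda>k. (y k)\<^sup>2)"
  shows "summable (\<lambda>k. (x k + y k)\<^sup>2)"
proof (rule summable_comparison_test[where g = "\<lambda>k. 2 * (x k)\<^sup>2 + 2 * (y k)\<^sup>2"])
  show "\<exists>N. \<forall>n\<ge>N. norm ((x n + y n)\<^sup>2) \<le> 2 * (x n)\<^sup>2 + 2 * (y n)\<^sup>2"
  proof (intro exI allI impI)
    fix n
    have "0 \<le> (x n - y n)\<^sup>2" by simp
    then have "(x n + y n)\<^sup>2 \<le> 2 * (x n)\<^sup>2 + 2 * (y n)\<^sup>2"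
      by (simp add: power2_eq_square algebra_simps)
    then show "norm ((x n + y n)\<^sup>2) \<le> 2 * (x n)\<^sup>2 + 2 * (y n)\<^sup>2"
      by simp
  qed
  show "summable (\<lambda>k. 2 * (x k)\<^sup>2 + 2 * (y k)\<^sup>2)"
    using assms by (intro summable_add summable_mult)
qed

lemma l2_summable_prod:
  fixes x y :: "nat \<Rightarrow> real"
  assumes "summable (\<lambda>k. (x k)\<^sup>2)" "summable (\<lambda>k. (y k)\<^sup>2)"
  shows "summable (\<lambda>k. x k * y k)"
proof (rule summable_comparison_test[where g = "\<lambda>k. (x k)\<^sup>2 + (y k)\<^sup>2"])
  show "\<exists>N. \<forall>n\<ge>N. norm (x n * y n) \<le> (x n)\<^sup>2 + (y n)\<^sup>2"
  proof (intro exI allI impI)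
    fix n
    have "0 \<le> (\<bar>x n\<bar> - \<bar>y n\<bar>)\<^sup>2" by simp
    then have "2 * (\<bar>x n\<bar> * \<bar>y n\<bar>) \<le> (x n)\<^sup>2 + (y n)\<^sup>2"
      by (simp add: power2_eq_square algebra_simps)
    moreover have "0 \<le> \<bar>x n\<bar> * \<bar>y n\<bar>" by simp
    ultimately have "\<bar>x n\<bar> * \<bar>y n\<bar> \<le> (x n)\<^sup>2 + (y n)\<^sup>2"
      by linarith
    then show "norm (x n * y n) \<le> (x n)\<^sup>2 + (y n)\<^sup>2"
      by (simp add: abs_mult)
  qed
  show "summable (\<lambda>k. (x k)\<^sup>2 + (y k)\<^sup>2)"
    using assms by (intro summable_add)
qed

instantiation l2 :: real_vector
begin

lift_definition zero_l2 :: l2 is "\<lambda>_. 0" by simp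

lift_definition plus_l2 :: "l2 \<Rightarrow> l2 \<Rightarrow> l2" is "\<lambda>x y k. x k + y k"
  by (rule l2_summable_add)

lift_definition uminus_l2 :: "l2 \<Rightarrow> l2" is "\<lambda>x k. - x k" by simp

lift_definition minus_l2 :: "l2 \<Rightarrow> l2 \<Rightarrow> l2" is "\<lambda>x y k. x k - y k"
proof -
  fix x y :: "nat \<Rightarrow> real"
  assume "summable (\<lambda>k. (x k)\<^sup>2)" "summable (\<lambda>k. (y k)\<^sup>2)"
  then have "summable (\<lambda>k. (x k + - y k)\<^sup>2)"
    by (intro l2_summable_add) simp_all
  then show "summable (\<lambda>k. (x k - y k)\<^sup>2)" by simp
qed

lift_definition scaleR_l2 :: "real \<Rightarrow> l2 \<Rightarrow> l2" is "\<lambda>r x k. r * x k"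
  by (simp add: power_mult_distrib summable_mult)

instance
  by standard (transfer; auto simp: algebra_simps)+

end

instantiation l2 :: real_inner
begin

lift_definition inner_l2 :: "l2 \<Rightarrow> l2 \<Rightarrow> real" is "\<lambda>x y. \<Sum>k. x k * y k" .

definition norm_l2 :: "l2 \<Rightarrow> real" where "norm_l2 x = sqrt (inner x x)"

definition sgn_l2 :: "l2 \<Rightarrow> l2" where "sgn_l2 x = x /\<^sub>R norm x"

definition dist_l2 :: "l2 \<Rightarrow> l2 \<Rightarrow> real" where "dist_l2 x y = norm (x - y)"

definition uniformity_l2 :: "(l2 \<times> l2) filter" where
  "uniformity_l2 = (INF e\<in>{0 <..}. principal {(x, y). dist x y < e})"

definition open_l2 :: "l2 set \<Rightarrow> bool" where
  "open_l2 U \<longleftrightarrow> (\<forall>x\<in>U. eventually (\<lambda>(x', y). x' = x \<longrightarrow> y \<in> U) uniformity)"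

instance
proof
  fix x y z :: l2 and r :: real
  show "inner x y = inner y x"
    by transfer (simp add: mult.commute)
  show "inner (x + y) z = inner x z + inner y z"
    by transfer (simp add: distrib_right suminf_add[symmetric] l2_summable_prod)
  show "inner (r *\<^sub>R x) y = r * inner x y"
    by transfer (simp add: mult.assoc suminf_mult l2_summable_prod)
  show "0 \<le> inner x x"
    by transfer (simp add: suminf_nonneg l2_summable_prod)
  show "(inner x x = 0) = (x = 0)"
  proof transfer
    fix x :: "nat \<Rightarrow> real"
    assume "summable (\<lambda>k. (x k)\<^sup>2)"
    then have "summable (\<lambda>k. x k * x k)" by (simp add: power2_eq_square)
    then show "((\<Sum>k. x k * x k) = 0) = (x = (\<lambda>_. 0))"
      by (simp add: suminf_eq_zero_iff fun_eq_iff)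
  qed
  show "norm x = sqrt (inner x x)" by (rule norm_l2_def)
qed (rule sgn_l2_def dist_l2_def open_l2_def uniformity_l2_def)+

end

definition coord :: "l2 \<Rightarrow> nat \<Rightarrow> real" where
  "coord x k = l2_seq x k"

lift_definition proj :: "nat set \<Rightarrow> l2 \<Rightarrow> l2" is
  "\<lambda>B x k. if k \<in> B then x k else 0"
proof -
  fix B and x :: "nat \<Rightarrow> real"
  assume s: "summable (\<lambda>k. (x k)\<^sup>2)"
  show "summable (\<lambda>k. (if k \<in> B then x k else 0)\<^sup>2)"
    by (rule summable_comparison_test[OF _ s]) auto
qed

definition supported_on :: "nat set \<Rightarrow> l2 set" where
  "supported_on C = {x. \<forall>k. k \<notin> C \<longrightarrow> coord x k = 0}"

text \<open>The block M_BC = P_B K*K restricted to l2(C), extended by zero on the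
  complement of l2(C) (i.e. precomposed with P_C); its operator norm equals the norm of
  the restricted operator l2(C) -> l2(B).\<close>
definition Mblock :: "(l2 \<Rightarrow> 'h::real_inner) \<Rightarrow> nat set \<Rightarrow> nat set \<Rightarrow> l2 \<Rightarrow> l2" where
  "Mblock K B C = (\<lambda>x. proj B (adjoint K (K (proj C x))))"

text \<open>The inverse of M_AA on l2(A), extended by zero on the complement (precomposed
  with P_A).\<close>
definition MAAinv :: "(l2 \<Rightarrow> 'h::real_inner) \<Rightarrow> nat set \<Rightarrow> l2 \<Rightarrow> l2" where
  "MAAinv K A = (\<lambda>y. inv_into (supported_on A) (Mblock K A A) (proj A y))"

end

theory Submission
  imports Defs
begin


lemma l2_eqI: "(\<And>k. coord x k = coord y k) \<Longrightarrow> x = y"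
  unfolding coord_def by (metis l2_seq_inject ext)

lemma coord_add[simp]: "coord (x + y) k = coord x k + coord y k"
  unfolding coord_def by transfer simp
lemma coord_diff[simp]: "coord (x - y) k = coord x k - coord y k"
  unfolding coord_def by transfer simp
lemma coord_minus[simp]: "coord (- x) k = - coord x k"
  unfolding coord_def by transfer simp
lemma coord_scaleR[simp]: "coord (r *\<^sub>R x) k = r * coord x k"
  unfolding coord_def by transfer simp
lemma coord_zero[simp]: "coord 0 k = 0"
  unfolding coord_def by transfer simp
lemma coord_proj[simp]: "coord (proj B x) k = (if k \<in> B then coord x k else 0)"
  unfolding coord_def by transfer simp
lemma coord_sum: "coord (sum f S) k = (\<Sum>i\<in>S. coord (f i) k)"
  by (induction S rule: infinite_finite_induct) auto
lemma summable_coord: "summable (\<lambda>k. (coord x k)\<^sup>2)"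
  unfolding coord_def using l2_seq by simp
lemma inner_coord: "x \<bullet> y = (\<Sum>k. coord x k * coord y k)"
  unfolding coord_def by transfer simp
lemma summable_coord_prod: "summable (\<lambda>k. coord x k * coord y k)"
  by (rule l2_summable_prod[OF summable_coord summable_coord])

lift_definition ev :: "nat \<Rightarrow> l2" is "\<lambda>j k. if k = j then 1 else 0"
  by (rule summable_finite[of "{j}" for j]) auto

lemma coord_ev[simp]: "coord (ev j) k = (if k = j then 1 else 0)"
  unfolding coord_def by transfer simp

lemma inner_ev: "x \<bullet> ev j = coord x j"
proof -
  have "(\<lambda>k. coord x k * coord (ev j) k) = (\<lambda>k. if k = j then coord x k else 0)"
    by auto
  then show ?thesis unfolding inner_coord using sums_single[of j "coord x"] sums_unique by metis
qed

lemma norm_ev: "norm (ev j) = 1"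
  unfolding norm_eq_sqrt_inner inner_ev by simp

lemma abs_coord_le: "\<bar>coord x j\<bar> \<le> norm x"
  using Cauchy_Schwarz_ineq2[of x "ev j"] by (simp add: inner_ev norm_ev)

lemma proj_add: "proj B (x + y) = proj B x + proj B y"
  by (rule l2_eqI) simp
lemma proj_diff: "proj B (x - y) = proj B x - proj B y"
  by (rule l2_eqI) simp
lemma proj_scaleR: "proj B (r *\<^sub>R x) = r *\<^sub>R proj B x"
  by (rule l2_eqI) simp
lemma proj_proj: "proj B (proj C x) = proj (B \<inter> C) x"
  by (rule l2_eqI) simp
lemma proj_compl: "proj (UNIV - B) x = x - proj B x"
  by (rule l2_eqI) simp
lemma proj_self_adj: "proj B x \<bullet> y = x \<bullet> proj B y"
  unfolding inner_coord by (rule arg_cong[where f=suminf]) auto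

lemma proj_norm: "norm (proj B x) \<le> norm x"
proof -
  have "proj B x \<bullet> proj B x \<le> x \<bullet> x"
    unfolding inner_coord
    by (rule suminf_le[OF _ summable_coord_prod summable_coord_prod]) auto
  then show ?thesis by (simp add: norm_le)
qed

lemma bounded_linear_proj: "bounded_linear (proj B)"
  by (rule bounded_linear_intro[where K=1]) (auto simp: proj_add proj_scaleR proj_norm)

lemma proj_finite_sum: "finite A \<Longrightarrow> proj A x = (\<Sum>k\<in>A. coord x k *\<^sub>R ev k)"
  by (rule l2_eqI) (simp add: coord_sum if_distrib cong: if_cong)

lemma proj_tendsto: "(\<lambda>N. proj {..<N} x) \<longlonglongrightarrow> x"
proof -
  have eq: "(norm (x - proj {..<N} x))\<^sup>2 = x \<bullet> x - (\<Sum>k<N. coord x k * coord x k)" for N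
  proof -
    have "(norm (x - proj {..<N} x))\<^sup>2 = (\<Sum>k. if k < N then 0 else coord x k * coord x k)"
      unfolding power2_norm_eq_inner inner_coord by (rule arg_cong[where f=suminf]) auto
    also have "\<dots> = (\<Sum>k. coord x k * coord x k) - (\<Sum>k. if k < N then coord x k * coord x k else 0)"
    proof -
      have s2: "summable (\<lambda>k. if k < N then coord x k * coord x k else 0)"
        by (rule summable_finite[of "{..<N}"]) auto
      show ?thesis unfolding suminf_diff[OF summable_coord_prod s2]
        by (rule arg_cong[where f=suminf]) auto
    qed
    also have "(\<Sum>k. if k < N then coord x k * coord x k else 0) = (\<Sum>k<N. coord x k * coord x k)"
      by (subst suminf_finite[of "{..<N}"]) auto
    finally show ?thesis by (simp add: inner_coord)
  qed
  have "(\<lambda>N. (\<Sum>k<N. coord x k * coord x k)) \<longlonglongrightarrow> x \<bullet> x"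
    unfolding inner_coord by (rule summable_LIMSEQ[OF summable_coord_prod])
  then have "(\<lambda>N. x \<bullet> x - (\<Sum>k<N. coord x k * coord x k)) \<longlonglongrightarrow> x \<bullet> x - x \<bullet> x"
    by (intro tendsto_intros)
  then have "(\<lambda>N. (norm (x - proj {..<N} x))\<^sup>2) \<longlonglongrightarrow> 0" by (simp add: eq)
  then have "(\<lambda>N. sqrt ((norm (x - proj {..<N} x))\<^sup>2)) \<longlonglongrightarrow> sqrt 0"
    by (rule tendsto_real_sqrt)
  then have "(\<lambda>N. norm (proj {..<N} x - x)) \<longlonglongrightarrow> 0" by (simp add: norm_minus_commute)
  then show ?thesis using tendsto_norm_zero_iff LIM_zero_cancel by blast
qed



lemma sq_le_aux:
  fixes S c :: real
  assumes "0 \<le> S" "S \<le> c * sqrt S"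
  shows "S \<le> c\<^sup>2"
proof (cases "S = 0")
  case True then show ?thesis by simp
next
  case False
  then have pos: "sqrt S > 0" using assms by simp
  have "sqrt S * sqrt S \<le> c * sqrt S" using assms by simp
  then have "sqrt S \<le> c" using pos by (rule mult_right_le_imp_le)
  then have "(sqrt S)\<^sup>2 \<le> c\<^sup>2" using pos by (intro power_mono) auto
  then show ?thesis using assms by simp
qed

lemma adjoint_exists:
  fixes K :: "l2 \<Rightarrow> 'h::real_inner"
  assumes bl: "bounded_linear K"
  shows "\<exists>K'. \<forall>x y. K x \<bullet> y = x \<bullet> K' y"
proof -
  interpret Kl: bounded_linear K by fact
  obtain B where B: "\<And>x. norm (K x) \<le> norm x * B" using Kl.bounded by blast
  have summ: "summable (\<lambda>k. (K (ev k) \<bullet> y)\<^sup>2)" for y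
  proof (rule summableI_nonneg_bounded)
    fix N
    define a where "a k = K (ev k) \<bullet> y" for k
    define v where "v = (\<Sum>k<N. a k *\<^sub>R ev k)"
    have cv: "coord v j = (if j < N then a j else 0)" for j
      unfolding v_def coord_sum by (simp add: if_distrib cong: if_cong)
    have vv: "v \<bullet> v = (\<Sum>k<N. (a k)\<^sup>2)"
      unfolding v_def inner_sum_left
      by (rule sum.cong) (auto simp: inner_commute[of "ev _"] inner_ev cv[unfolded v_def] power2_eq_square)
    have Kv: "K v \<bullet> y = (\<Sum>k<N. (a k)\<^sup>2)"
      unfolding v_def Kl.sum Kl.scaleR inner_sum_left by (simp add: a_def power2_eq_square)
    have "(\<Sum>k<N. (a k)\<^sup>2) \<le> norm (K v) * norm y"
      using Kv Cauchy_Schwarz_ineq2[of "K v" y] by simp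
    also have "\<dots> \<le> norm v * B * norm y" by (rule mult_right_mono[OF B]) simp
    also have "\<dots> = (B * norm y) * sqrt (\<Sum>k<N. (a k)\<^sup>2)"
      unfolding norm_eq_sqrt_inner vv by simp
    finally have "(\<Sum>k<N. (a k)\<^sup>2) \<le> (B * norm y)\<^sup>2"
      by (intro sq_le_aux) (auto intro: sum_nonneg)
    then show "(\<Sum>k<N. (K (ev k) \<bullet> y)\<^sup>2) \<le> (B * norm y)\<^sup>2" by (simp add: a_def)
  qed simp
  define K' where "K' y = Abs_l2 (\<lambda>k. K (ev k) \<bullet> y)" for y
  have cK: "coord (K' y) k = K (ev k) \<bullet> y" for y k
    unfolding K'_def coord_def using summ[of y] by (simp add: Abs_l2_inverse)
  have "K x \<bullet> y = x \<bullet> K' y" for x y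
  proof -
    have ps: "(\<Sum>k<N. coord x k * coord (K' y) k) = K (proj {..<N} x) \<bullet> y" for N
      unfolding proj_finite_sum[OF finite_lessThan] Kl.sum Kl.scaleR inner_sum_left cK by simp
    have "(\<lambda>N. \<Sum>k<N. coord x k * coord (K' y) k) \<longlonglongrightarrow> x \<bullet> K' y"
      unfolding inner_coord by (rule summable_LIMSEQ[OF summable_coord_prod])
    moreover have "(\<lambda>N. K (proj {..<N} x) \<bullet> y) \<longlonglongrightarrow> K x \<bullet> y"
      by (intro tendsto_intros Kl.tendsto proj_tendsto)
    ultimately show ?thesis unfolding ps using LIMSEQ_unique by metis
  qed
  then show ?thesis by blast
qed

lemma adjoint_prop:
  fixes K :: "l2 \<Rightarrow> 'h::real_inner"
  assumes "bounded_linear K"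
  shows "K x \<bullet> y = x \<bullet> adjoint K y"
proof -
  have "\<forall>x y. K x \<bullet> y = x \<bullet> adjoint K y"
    unfolding adjoint_def by (rule someI_ex[OF adjoint_exists[OF assms]])
  then show ?thesis by blast
qed

lemma adjoint_bl:
  fixes K :: "l2 \<Rightarrow> 'h::real_inner"
  assumes bl: "bounded_linear K"
  shows "bounded_linear (adjoint K)"
proof -
  interpret Kl: bounded_linear K by fact
  obtain B where B: "\<And>x. norm (K x) \<le> norm x * B" using Kl.bounded by blast
  note ad = adjoint_prop[OF bl]
  show ?thesis
  proof (rule bounded_linear_intro[where K=B])
    fix a b
    show "adjoint K (a + b) = adjoint K a + adjoint K b"
      by (rule vector_eq_ldot[THEN iffD1]) (simp add: ad[symmetric] inner_add_right)
  next
    fix r a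
    show "adjoint K (r *\<^sub>R a) = r *\<^sub>R adjoint K a"
      by (rule vector_eq_ldot[THEN iffD1]) (simp add: ad[symmetric])
  next
    fix y
    let ?z = "adjoint K y"
    have "(norm ?z)\<^sup>2 = K ?z \<bullet> y" by (simp add: ad power2_norm_eq_inner)
    also have "\<dots> \<le> norm (K ?z) * norm y" by (rule Cauchy_Schwarz_ineq2[THEN abs_le_D1])
    also have "\<dots> \<le> norm ?z * B * norm y" by (rule mult_right_mono[OF B]) simp
    finally have "norm ?z * norm ?z \<le> norm ?z * (B * norm y)" by (simp add: power2_eq_square mult.assoc)
    then have "norm ?z \<le> B * norm y \<or> norm ?z = 0"
      by (cases "norm ?z = 0") (auto intro: mult_left_le_imp_le)
    moreover have "norm (K (ev 0)) \<le> B" using B[of "ev 0"] by (simp add: norm_ev)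
    then have "0 \<le> B" using norm_ge_zero[of "K (ev 0)"] by linarith
    ultimately show "norm ?z \<le> norm y * B" by (auto simp: mult.commute)
  qed
qed



lemma finite_big_coords:
  fixes v :: l2 and w :: "nat \<Rightarrow> real"
  assumes "c > 0" "w0 > 0" "\<And>k. w k \<ge> w0"
  shows "finite {k. \<bar>coord v k\<bar> > c * w k}"
proof -
  have "(\<lambda>k. (coord v k)\<^sup>2) \<longlonglongrightarrow> 0" by (rule summable_LIMSEQ_zero[OF summable_coord])
  then have "(\<lambda>k. sqrt ((coord v k)\<^sup>2)) \<longlonglongrightarrow> sqrt 0" by (rule tendsto_real_sqrt)
  then have "(\<lambda>k. \<bar>coord v k\<bar>) \<longlonglongrightarrow> 0" by simp
  moreover have "c * w0 > 0" using assms by simp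
  ultimately have "eventually (\<lambda>k. \<bar>coord v k\<bar> < c * w0) sequentially"
    by (rule order_tendstoD)
  then obtain N where N: "\<And>k. k \<ge> N \<Longrightarrow> \<bar>coord v k\<bar> < c * w0"
    unfolding eventually_sequentially by blast
  have "{k. \<bar>coord v k\<bar> > c * w k} \<subseteq> {..<N}"
  proof
    fix k assume k: "k \<in> {k. \<bar>coord v k\<bar> > c * w k}"
    show "k \<in> {..<N}"
    proof (rule ccontr)
      assume "k \<notin> {..<N}"
      then have "\<bar>coord v k\<bar> < c * w0" using N by simp
      moreover have "c * w0 \<le> c * w k" using assms by simp
      ultimately show False using k by simp
    qed
  qed
  then show ?thesis using finite_subset by blast
qed

lemma proj_zero[simp]: "proj A 0 = 0"
  by (rule l2_eqI) simp

lemma supported_on_iff: "x \<in> supported_on A \<longleftrightarrow> proj A x = x"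
proof
  assume "x \<in> supported_on A" then show "proj A x = x" by (intro l2_eqI) (auto simp: supported_on_def)
next
  assume h: "proj A x = x"
  show "x \<in> supported_on A" unfolding supported_on_def
  proof (intro CollectI allI impI)
    fix k assume "k \<notin> A"
    then have "coord (proj A x) k = 0" by simp
    then show "coord x k = 0" using h by simp
  qed
qed

lemma bounded_linear_Mblock: "bounded_linear K \<Longrightarrow> bounded_linear (Mblock K B C)"
  unfolding Mblock_def
  by (intro bounded_linear_compose[OF bounded_linear_proj] bounded_linear_compose[OF adjoint_bl]
      bounded_linear_compose[OF _ bounded_linear_proj])

lemma subspace_supp: "subspace (supported_on A)"
  by (auto simp: subspace_def supported_on_iff proj_add proj_scaleR)

lemma supp_span: "finite A \<Longrightarrow> supported_on A \<subseteq> span (ev ` A)"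
proof
  fix x assume "finite A" "x \<in> supported_on A"
  then have "x = (\<Sum>k\<in>A. coord x k *\<^sub>R ev k)"
    using proj_finite_sum supported_on_iff by metis
  also have "\<dots> \<in> span (ev ` A)"
    by (intro span_sum span_scale span_base) simp
  finally show "x \<in> span (ev ` A)" .
qed

lemma M_inj:
  fixes K :: "l2 \<Rightarrow> 'h::real_inner"
  assumes bl: "bounded_linear K" and inj: "inj K"
  shows "inj_on (Mblock K A A) (supported_on A)"
proof (rule inj_onI)
  interpret Kl: bounded_linear K by fact
  interpret Ml: bounded_linear "Mblock K A A" by (rule bounded_linear_Mblock[OF bl])
  fix x y assume x: "x \<in> supported_on A" and y: "y \<in> supported_on A"
    and eq: "Mblock K A A x = Mblock K A A y"
  define z where "z = x - y"
  have z: "proj A z = z" using x y by (simp add: z_def proj_diff supported_on_iff)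
  have "Mblock K A A z = 0" using eq by (simp add: z_def Ml.diff)
  then have "0 = z \<bullet> Mblock K A A z" by simp
  also have "\<dots> = K z \<bullet> K z"
    unfolding Mblock_def z inner_commute[of z] proj_self_adj adjoint_prop[OF bl]
    by (simp add: z inner_commute)
  finally have "K z = 0" by simp
  then have "K z = K 0" by (simp add: Kl.zero)
  then have "z = 0" by (rule injD[OF inj])
  then show "x = y" by (simp add: z_def)
qed

lemma M_surj:
  fixes K :: "l2 \<Rightarrow> 'h::real_inner"
  assumes bl: "bounded_linear K" and inj: "inj K" and fin: "finite A"
  shows "Mblock K A A ` supported_on A = supported_on A"
proof -
  let ?M = "Mblock K A A" and ?S = "supported_on A"
  have lin: "linear ?M" using bounded_linear_Mblock[OF bl] bounded_linear.linear by blast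
  have MS: "?M ` ?S \<subseteq> ?S"
  proof
    fix y assume "y \<in> ?M ` ?S"
    then obtain x where "y = ?M x" by blast
    then show "y \<in> ?S" unfolding Mblock_def supported_on_iff by (simp add: proj_proj)
  qed
  obtain B where B: "B \<subseteq> ?S" "independent B" "?S \<subseteq> span B"
    by (rule basis_exists[of ?S])
  have "B \<subseteq> span (ev ` A)" using B(1) supp_span[OF fin] by (rule order_trans)
  then have finB: "finite B"
    using independent_span_bound[OF finite_imageI[OF fin] B(2)] by blast
  have spB: "span B \<subseteq> ?S" by (rule span_minimal[OF B(1) subspace_supp])
  have injB: "inj_on ?M (span B)" by (rule inj_on_subset[OF M_inj[OF bl inj] spB])
  have indMB: "independent (?M ` B)"
    by (rule linear_independent_injective_image[OF lin B(2) injB])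
  have cardMB: "card (?M ` B) = card B"
    by (rule card_image[OF inj_on_subset[OF injB span_superset]])
  have "?S \<subseteq> span (?M ` B)"
  proof
    fix b assume b: "b \<in> ?S"
    show "b \<in> span (?M ` B)"
    proof (rule ccontr)
      assume nb: "b \<notin> span (?M ` B)"
      then have bn: "b \<notin> ?M ` B" using span_superset[of "?M ` B"] by (meson subsetD)
      have ind: "independent (insert b (?M ` B))"
        using indMB nb by (rule independent_insertI[rotated])
      have "?M ` B \<subseteq> ?M ` ?S" using B(1) by (rule image_mono)
      then have "?M ` B \<subseteq> span B" using MS B(3) by (meson order_trans)
      then have sub: "insert b (?M ` B) \<subseteq> span B"
        using b B(3) by (meson insert_subset subsetD)
      have "card (insert b (?M ` B)) \<le> card B"
        using independent_span_bound[OF finB ind sub] by blast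
      moreover have "card (insert b (?M ` B)) = card B + 1"
        using bn finB cardMB by simp
      ultimately show False by simp
    qed
  qed
  also have "span (?M ` B) = ?M ` span B" by (rule linear_span_image[OF lin])
  also have "\<dots> \<subseteq> ?M ` ?S" using spB by blast
  finally show ?thesis using MS by (rule equalityI[rotated])
qed



lemma MAAinv_proj: "MAAinv K A (proj A y) = MAAinv K A y"
  unfolding MAAinv_def by (simp add: proj_proj)

lemma Mblock_in: "Mblock K A C x \<in> supported_on A"
  unfolding Mblock_def supported_on_iff by (simp add: proj_proj)

lemma MAAinv_props:
  fixes K :: "l2 \<Rightarrow> 'h::real_inner"
  assumes bl: "bounded_linear K" and inj: "inj K" and fin: "finite A"
  shows "MAAinv K A y \<in> supported_on A"
    and "Mblock K A A (MAAinv K A y) = proj A y"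
    and "x \<in> supported_on A \<Longrightarrow> MAAinv K A (Mblock K A A x) = x"
    and "bounded_linear (MAAinv K A)"
proof -
  let ?M = "Mblock K A A" and ?S = "supported_on A" and ?g = "MAAinv K A"
  have surj: "?M ` ?S = ?S" by (rule M_surj[OF bl inj fin])
  have injM: "inj_on ?M ?S" by (rule M_inj[OF bl inj])
  interpret Ml: bounded_linear ?M by (rule bounded_linear_Mblock[OF bl])
  have pin: "proj A z \<in> ?M ` ?S" for z unfolding surj supported_on_iff by (simp add: proj_proj)
  have gS: "?g z \<in> ?S" for z unfolding MAAinv_def by (rule inv_into_into[OF pin])
  have Mg: "?M (?g z) = proj A z" for z unfolding MAAinv_def by (rule f_inv_into_f[OF pin])
  show "?g y \<in> ?S" by (rule gS)
  show "?M (?g y) = proj A y" by (rule Mg)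
  show "x \<in> ?S \<Longrightarrow> ?g (?M x) = x"
  proof -
    assume x: "x \<in> ?S"
    have "proj A (?M x) = ?M x" using Mblock_in supported_on_iff by blast
    then show "?g (?M x) = x" unfolding MAAinv_def using inv_into_f_f[OF injM x] by simp
  qed
  have sub: "subspace ?S" by (rule subspace_supp)
  have add: "?g (a + b) = ?g a + ?g b" for a b
  proof (rule inj_onD[OF injM])
    show "?M (?g (a + b)) = ?M (?g a + ?g b)" by (simp add: Mg Ml.add proj_add)
    show "?g (a + b) \<in> ?S" by (rule gS)
    show "?g a + ?g b \<in> ?S" using sub gS by (simp add: subspace_add)
  qed
  have scl: "?g (r *\<^sub>R a) = r *\<^sub>R ?g a" for r a
  proof (rule inj_onD[OF injM])
    show "?M (?g (r *\<^sub>R a)) = ?M (r *\<^sub>R ?g a)" by (simp add: Mg Ml.scaleR proj_scaleR)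
    show "?g (r *\<^sub>R a) \<in> ?S" by (rule gS)
    show "r *\<^sub>R ?g a \<in> ?S" using sub gS by (simp add: subspace_scale)
  qed
  have lin: "linear ?g" by (rule linearI[OF add scl])
  show "bounded_linear ?g"
  proof (rule bounded_linear_intro[OF add scl])
    fix y
    have "?g y = ?g (\<Sum>k\<in>A. coord y k *\<^sub>R ev k)"
      using MAAinv_proj[of K A y] proj_finite_sum[OF fin] by metis
    also have "\<dots> = (\<Sum>k\<in>A. coord y k *\<^sub>R ?g (ev k))"
      by (simp add: linear_sum[OF lin] linear_scale[OF lin] o_def)
    finally have "norm (?g y) = norm (\<Sum>k\<in>A. coord y k *\<^sub>R ?g (ev k))" by simp
    also have "\<dots> \<le> (\<Sum>k\<in>A. norm (coord y k *\<^sub>R ?g (ev k)))" by (rule norm_sum)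
    also have "\<dots> \<le> (\<Sum>k\<in>A. norm y * norm (?g (ev k)))"
      by (rule sum_mono) (simp add: mult_right_mono abs_coord_le)
    also have "\<dots> = norm y * (\<Sum>k\<in>A. norm (?g (ev k)))" by (simp add: sum_distrib_left)
    finally show "norm (?g y) \<le> norm y * (\<Sum>k\<in>A. norm (?g (ev k)))" .
  qed
qed



theorem proposition3p11:
  fixes K :: "l2 \<Rightarrow> 'h::{real_inner, complete_space}"
    and f :: 'h and w :: "nat \<Rightarrow> real" and w0 \<gamma> :: real and u :: l2
  assumes "bounded_linear K" and "inj K"
    and "w0 > 0" and "\<And>k. w k \<ge> w0"
    and "\<gamma> > 0"
  defines "\<A> \<equiv> {k. \<bar>coord (u - \<gamma> *\<^sub>R adjoint K (K u - f)) k\<bar> > \<gamma> * w k}"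
  defines "\<I> \<equiv> UNIV - \<A>"
  defines "G \<equiv> (\<lambda>x. (x - proj \<A> x) + \<gamma> *\<^sub>R proj \<A> (adjoint K (K x)))"
  shows "\<exists>Ginv. bounded_linear Ginv \<and> (\<forall>x. Ginv (G x) = x) \<and> (\<forall>y. G (Ginv y) = y)
     \<and> onorm Ginv \<le> onorm (MAAinv K \<A>) * (1 / \<gamma> + onorm (Mblock K \<A> \<I>)) + 1"
proof -
  interpret Kl: bounded_linear K by fact
  interpret Ksl: bounded_linear "adjoint K" by (rule adjoint_bl[OF assms(1)])
  have finA: "finite \<A>" unfolding \<A>_def by (rule finite_big_coords[OF assms(5) assms(3) assms(4)])
  note props = MAAinv_props[OF assms(1,2) finA]
  define Mi where "Mi = MAAinv K \<A>"
  define Mb where "Mb = Mblock K \<A> \<I>"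
  define P where "P = proj \<A>"
  define Q where "Q = proj \<I>"
  define Ks where "Ks = adjoint K"
  interpret Ksl2: bounded_linear Ks unfolding Ks_def by (rule adjoint_bl[OF assms(1)])
  define Ginv where "Ginv y = Mi ((1/\<gamma>) *\<^sub>R y - Mb y) + Q y" for y
  have blMi: "bounded_linear Mi" unfolding Mi_def by (rule props(4))
  have blMb: "bounded_linear Mb" unfolding Mb_def by (rule bounded_linear_Mblock[OF assms(1)])
  interpret Mil: bounded_linear Mi by (rule blMi)
  interpret Mbl: bounded_linear Mb by (rule blMb)
  have Qdef: "Q x = x - P x" for x unfolding Q_def P_def \<I>_def by (rule proj_compl)
  have PQ: "P (Q x) = 0" for x unfolding P_def Q_def \<I>_def by (rule l2_eqI) simp
  have QP: "Q (P x) = 0" for x unfolding P_def Q_def \<I>_def by (rule l2_eqI) simp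
  have PP: "P (P x) = P x" for x unfolding P_def by (simp add: proj_proj)
  have QQ: "Q (Q x) = Q x" for x unfolding Q_def by (simp add: proj_proj)
  have Padd: "P (a + b) = P a + P b" "P (a - b) = P a - P b" "P (r *\<^sub>R a) = r *\<^sub>R P a" for a b r
    unfolding P_def by (simp_all add: proj_add proj_diff proj_scaleR)
  have Qadd: "Q (a + b) = Q a + Q b" "Q (a - b) = Q a - Q b" "Q (r *\<^sub>R a) = r *\<^sub>R Q a" for a b r
    unfolding Q_def by (simp_all add: proj_add proj_diff proj_scaleR)
  have Gx: "G x = Q x + \<gamma> *\<^sub>R P (Ks (K x))" for x by (simp add: G_def Qdef P_def Ks_def)
  have Mbx: "Mb x = P (Ks (K (Q x)))" for x unfolding Mb_def Mblock_def P_def Q_def Ks_def ..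
  have MAx: "Mblock K \<A> \<A> x = P (Ks (K (P x)))" for x unfolding Mblock_def P_def Ks_def ..
  have MiP: "Mi (P y) = Mi y" for y unfolding Mi_def P_def by (rule MAAinv_proj)
  have PMi: "P (Mi y) = Mi y" for y using props(1)[of y] unfolding Mi_def P_def supported_on_iff .
  have MMi: "P (Ks (K (Mi y))) = P y" for y
    using props(2)[of y] unfolding Mi_def P_def MAx[unfolded P_def] PMi[unfolded P_def Mi_def] .
  have MiM: "Mi (P (Ks (K (P x)))) = P x" for x
    using props(3)[of "P x"] unfolding Mi_def P_def supported_on_iff by (simp add: proj_proj Mblock_def Ks_def)
  have PMb: "P (Mb x) = Mb x" for x by (simp add: Mbx PP)
  have PQx: "P x + Q x = x" for x by (simp add: Qdef)
  have inv1: "Ginv (G x) = x" for x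
  proof -
    have QG: "Q (G x) = Q x" by (simp add: Gx Qadd QQ QP)
    have "P ((1/\<gamma>) *\<^sub>R G x - Mb (G x)) = P (Ks (K (P x)))"
    proof -
      have "P ((1/\<gamma>) *\<^sub>R G x - Mb (G x)) = P (Ks (K x)) - P (Ks (K (Q x)))"
        using assms(5) by (simp add: Padd Gx PQ PP PMb) (simp add: Mbx Qadd QQ QP)
      also have "\<dots> = P (Ks (K (x - Q x)))" by (simp add: Padd Kl.diff Ksl2.diff)
      finally show ?thesis by (simp add: Qdef)
    qed
    then have "Mi ((1/\<gamma>) *\<^sub>R G x - Mb (G x)) = P x" using MiP MiM by metis
    then show ?thesis unfolding Ginv_def QG by (rule ssubst) (rule PQx)
  qed
  have inv2: "G (Ginv y) = y" for y
  proof -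
    define z where "z = Mi ((1/\<gamma>) *\<^sub>R y - Mb y)"
    have Qz: "Q z = 0" using QP PMi z_def by metis
    have QGi: "Q (Ginv y) = Q y" unfolding Ginv_def z_def[symmetric] by (simp add: Qadd Qz QQ)
    have "P (Ks (K (Ginv y))) = P (Ks (K z)) + Mb y"
      unfolding Ginv_def z_def[symmetric] by (simp add: Kl.add Ksl2.add Padd Mbx)
    also have "P (Ks (K z)) = (1/\<gamma>) *\<^sub>R P y - Mb y"
      unfolding z_def MMi by (simp add: Padd PMb)
    finally have "P (Ks (K (Ginv y))) = (1/\<gamma>) *\<^sub>R P y" by simp
    then have "G (Ginv y) = Q y + P y" using assms(5) by (simp add: Gx QGi)
    then show ?thesis using PQx by (simp add: add.commute)
  qed
  have blG: "bounded_linear Ginv" unfolding Ginv_def[abs_def] Q_def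
    by (intro bounded_linear_add bounded_linear_compose[OF blMi] bounded_linear_sub
        bounded_linear_scaleR_right bounded_linear_ident blMb bounded_linear_proj)
  have onMi: "0 \<le> onorm Mi" by (rule onorm_pos_le[OF blMi])
  have onMb: "0 \<le> onorm Mb" by (rule onorm_pos_le[OF blMb])
  have bnd: "onorm Ginv \<le> onorm Mi * (1 / \<gamma> + onorm Mb) + 1"
  proof (rule onorm_bound)
    show "0 \<le> onorm Mi * (1 / \<gamma> + onorm Mb) + 1" using onMi onMb assms(5) by simp
    fix y
    have a: "norm ((1/\<gamma>) *\<^sub>R y - Mb y) \<le> (1 / \<gamma> + onorm Mb) * norm y"
    proof -
      have "norm ((1/\<gamma>) *\<^sub>R y - Mb y) \<le> norm ((1/\<gamma>) *\<^sub>R y) + norm (Mb y)" by (rule norm_triangle_ineq4)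
      also have "\<dots> \<le> (1/\<gamma>) * norm y + onorm Mb * norm y"
        using onorm[OF blMb, of y] assms(5) by simp
      finally show ?thesis by (simp add: algebra_simps)
    qed
    have "norm (Ginv y) \<le> norm (Mi ((1/\<gamma>) *\<^sub>R y - Mb y)) + norm (Q y)"
      unfolding Ginv_def by (rule norm_triangle_ineq)
    also have "\<dots> \<le> onorm Mi * norm ((1/\<gamma>) *\<^sub>R y - Mb y) + norm y"
      using onorm[OF blMi] proj_norm unfolding Q_def by (rule add_mono)
    also have "\<dots> \<le> onorm Mi * ((1 / \<gamma> + onorm Mb) * norm y) + norm y"
      using a onMi by (simp add: mult_left_mono)
    finally show "norm (Ginv y) \<le> (onorm Mi * (1 / \<gamma> + onorm Mb) + 1) * norm y"
      by (simp add: algebra_simps)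
  qed
  show ?thesis
    using blG inv1 inv2 bnd unfolding Mi_def Mb_def by blast
qed

end
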